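(* Let $n,d\ge1$, let $\mathcal{S}$ be a subspace of $\mathbb{R}^{nd}$, let $\lambda_-\le\lambda_+$ be in $(-1,1)$, and let $I=\{1,\dots,K\}$. A set of pairs $\{(\mathbf{x}^k,\mathbf{y}^k)\}_{k\in I}$ with $\mathbf{x}^k,\mathbf{y}^k\in\mathbb{R}^{nd}$ is $\mathcal{M}^{\mathcal{S}}_{\lambda_-,\lambda_+}$-interpolable, i.e. there exists $M\in\mathcal{M}^{\mathcal{S}}_{\lambda_-,\lambda_+}$ with $\mathbf{y}^k=M\mathbf{x}^k$ for all $k\in I$, if and only if $$\bar X=\bar Y,\qquad (Y_\perp-\lambda_-X_\perp)^T(Y_\perp-\lambda_+X_\perp)\preceq 0,\qquad X_\perp^TY_\perp=Y_\perp^TX_\perp,$$ where $X=[\mathbf{x}^1\dots\mathbf{x}^K]$, $Y=[\mathbf{y}^1\dots\mathbf{y}^K]\in\mathbb{R}^{nd\times K}$, $\bar X,\bar Y$ are obtained by orthogonally projecting each column of $X,Y$ onto $\mathcal{S}$, and $X_\perp=X-\bar X$, $Y_\perp=Y-\bar Y$ are the projections onto the orthogonal complement $\mathcal{S}^\perp$.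
   Context: $\mathcal{M}^{\mathcal{S}}_{\lambda_-,\lambda_+}$ is the set of symmetric matrices $M\in\mathbb{R}^{nd\times nd}$ such that $\lambda_1(M)=\dots=\lambda_{|\mathcal{S}|}(M)=1$ with corresponding eigenvectors forming a basis of $\mathcal{S}$ (where $|\mathcal{S}|$ is the dimension of $\mathcal{S}$), and the remaining eigenvalues satisfy $\lambda_-\le\lambda_{nd}(M)\le\dots\le\lambda_{|\mathcal{S}|+1}(M)\le\lambda_+$. *)

theory Defs
  imports "HOL-Analysis.Analysis"
begin

definition orth_proj :: "(real^'n) set \<Rightarrow> real^'n \<Rightarrow> real^'n" where
  "orth_proj S x = (THE p. p \<in> S \<and> x - p \<in> orthogonal_comp S)"

definition proj_cols :: "(real^'n) set \<Rightarrow> real^'k^'n \<Rightarrow> real^'k^'n" where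
  "proj_cols S X = (\<chi> i k. orth_proj S (column k X) $ i)"

definition neg_semidef :: "real^'k^'k \<Rightarrow> bool" where
  "neg_semidef A \<longleftrightarrow> (\<forall>v. v \<bullet> (A *v v) \<le> 0)"

text \<open>The class M^S_{lm,lp}: symmetric matrices whose eigenvalues (with multiplicity,
  read off an eigenbasis v_i with eigenvalues mu_i) consist of dim S copies of 1,
  whose eigenvectors form a basis of S, and the remaining ones lie in [lm, lp].\<close>
definition M_class :: "(real^'n) set \<Rightarrow> real \<Rightarrow> real \<Rightarrow> real^'n^'n \<Rightarrow> bool" where
  "M_class S lm lp M \<longleftrightarrow> transpose M = M \<and>
     (\<exists>(v :: 'n \<Rightarrow> real^'n) (mu :: 'n \<Rightarrow> real) (J :: 'n set).
        inj v \<and> independent (range v) \<and> span (range v) = UNIV \<and>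
        (\<forall>i. M *v v i = mu i *\<^sub>R v i) \<and>
        card J = dim S \<and> independent (v ` J) \<and> span (v ` J) = S \<and>
        (\<forall>i\<in>J. mu i = 1) \<and>
        (\<forall>i. i \<notin> J \<longrightarrow> lm \<le> mu i \<and> mu i \<le> lp))"

definition interpolable :: "(real^'n) set \<Rightarrow> real \<Rightarrow> real \<Rightarrow> real^'k^'n \<Rightarrow> real^'k^'n \<Rightarrow> bool" where
  "interpolable S lm lp X Y \<longleftrightarrow>
     (\<exists>M. M_class S lm lp M \<and> (\<forall>k. column k Y = M *v column k X))"

end

theory Submission
  imports Defs
begin

lemma orth_proj_char:
  fixes S :: "(real^'n) set"
  assumes "subspace S"
  shows "orth_proj S x \<in> S \<and> x - orth_proj S x \<in> orthogonal_comp S"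
proof -
  obtain p w where pw: "x = p + w" "p \<in> S" "w \<in> orthogonal_comp S"
    using subspace_sum_orthogonal_comp[OF assms] set_plus_elim by (metis UNIV_I)
  have uniq: "q = p" if "q \<in> S" "x - q \<in> orthogonal_comp S" for q
  proof -
    have "p - q \<in> S" using that pw assms by (simp add: subspace_diff)
    moreover have "p - q \<in> orthogonal_comp S"
    proof -
      have "p - q = (x - q) - w" using pw by simp
      then show ?thesis using that pw subspace_orthogonal_comp by (metis subspace_diff)
    qed
    ultimately have "p - q = 0" using orthogonal_Int_0[OF assms] by blast
    then show ?thesis by simp
  qed
  have "p \<in> S \<and> x - p \<in> orthogonal_comp S" using pw by simp
  then have "orth_proj S x = p" unfolding orth_proj_def using uniq by (intro the_equality) auto
  then show ?thesis using pw by simp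
qed

lemma orth_proj_unique:
  fixes S :: "(real^'n) set"
  assumes "subspace S" "q \<in> S" "x - q \<in> orthogonal_comp S"
  shows "orth_proj S x = q"
proof -
  have c: "orth_proj S x \<in> S" "x - orth_proj S x \<in> orthogonal_comp S" using orth_proj_char[OF assms(1)] by auto
  have "orth_proj S x - q \<in> S" using c assms by (simp add: subspace_diff)
  moreover have "orth_proj S x - q = (x - q) - (x - orth_proj S x)" by simp
  then have "orth_proj S x - q \<in> orthogonal_comp S" using c assms subspace_orthogonal_comp by (metis subspace_diff)
  ultimately have "orth_proj S x - q = 0" using orthogonal_Int_0[OF assms(1)] by blast
  then show ?thesis by simp
qed

lemma orth_proj_linear:
  fixes S :: "(real^'n) set"
  assumes "subspace S"
  shows "linear (orth_proj S)"
proof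
  fix x y :: "real^'n" and c :: real
  have c: "\<And>x. orth_proj S x \<in> S" "\<And>x. x - orth_proj S x \<in> orthogonal_comp S" using orth_proj_char[OF assms] by auto
  show "orth_proj S (x + y) = orth_proj S x + orth_proj S y"
  proof (rule orth_proj_unique[OF assms])
    show "orth_proj S x + orth_proj S y \<in> S" using c assms by (simp add: subspace_add)
    have "x + y - (orth_proj S x + orth_proj S y) = (x - orth_proj S x) + (y - orth_proj S y)" by simp
    then show "x + y - (orth_proj S x + orth_proj S y) \<in> orthogonal_comp S"
      using c subspace_orthogonal_comp by (metis subspace_add)
  qed
  show "orth_proj S (c *\<^sub>R x) = c *\<^sub>R orth_proj S x"
  proof (rule orth_proj_unique[OF assms])
    show "c *\<^sub>R orth_proj S x \<in> S" using c assms by (simp add: subspace_scale)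
    have "c *\<^sub>R x - c *\<^sub>R orth_proj S x = c *\<^sub>R (x - orth_proj S x)" by (simp add: algebra_simps)
    then show "c *\<^sub>R x - c *\<^sub>R orth_proj S x \<in> orthogonal_comp S"
      using c subspace_orthogonal_comp by (metis subspace_scale)
  qed
qed

lemma proj_cols_mult:
  fixes S :: "(real^'n) set" and X :: "real^'k^'n"
  assumes "subspace S"
  shows "proj_cols S X *v u = orth_proj S (X *v u)"
proof -
  have lin: "linear (orth_proj S)" by (rule orth_proj_linear[OF assms])
  have "X *v u = (\<Sum>i\<in>UNIV. u $ i *\<^sub>R column i X)"
    by (simp add: matrix_mult_sum scalar_mult_eq_scaleR)
  then have "orth_proj S (X *v u) = (\<Sum>i\<in>UNIV. u $ i *\<^sub>R orth_proj S (column i X))"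
    by (simp add: linear_sum[OF lin] linear_scale[OF lin])
  then show ?thesis
    by (simp add: proj_cols_def matrix_vector_mult_def vec_eq_iff sum_component mult.commute)
qed

lemma transpose_inner:
  fixes A :: "real^'m^'n"
  shows "(A *v x) \<bullet> y = x \<bullet> (transpose A *v y)"
  by (metis dot_lmul_matrix inner_commute transpose_transpose vector_transpose_matrix)

lemma sym_inner:
  fixes A :: "real^'n^'n"
  assumes "transpose A = A"
  shows "(A *v x) \<bullet> y = x \<bullet> (A *v y)"
  using transpose_inner[of A x y] assms by simp

lemma quad_lemma:
  fixes d C :: real
  assumes "\<And>t. 2 * t * d \<le> t * t * C"
  shows "d = 0"
proof (rule ccontr)
  assume "d \<noteq> 0"
  then have dd: "d * d > 0" by (metis linorder_neqE_linordered_idom mult_neg_neg mult_pos_pos)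
  show False
  proof (cases "C \<le> 0")
    case True
    have "2 * d * d \<le> d * d * C" using assms[of d] .
    moreover have "d * d * C \<le> 0" using True dd by (simp add: mult_nonneg_nonpos)
    ultimately show False using dd by linarith
  next
    case False
    have "2 * (d / C) * d \<le> (d / C) * (d / C) * C" using assms[of "d / C"] .
    moreover have "(d / C) * (d / C) * C = d * d / C" using False by (simp add: field_simps)
    moreover have "2 * (d / C) * d = 2 * (d * d / C)" by simp
    moreover have "d * d / C > 0" using False dd by simp
    ultimately show False by linarith
  qed
qed

lemma eigen_exists:
  fixes A :: "real^'n^'n"
  assumes sym: "transpose A = A" and W: "subspace W" and inv: "\<forall>w\<in>W. A *v w \<in> W"
    and ne: "W \<noteq> {0}"
  shows "\<exists>u\<in>W. u \<noteq> 0 \<and> (\<exists>\<mu>. A *v u = \<mu> *\<^sub>R u)"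
proof -
  define K where "K = W \<inter> sphere 0 1"
  have "compact K" unfolding K_def
    using closed_subspace[OF W] compact_sphere by (simp add: closed_Int_compact)
  obtain w where w: "w \<in> W" "w \<noteq> 0" using ne W subspace_0 by blast
  have "w /\<^sub>R norm w \<in> K" unfolding K_def using w W by (simp add: subspace_scale)
  then have "K \<noteq> {}" by blast
  have "continuous_on K (\<lambda>x. x \<bullet> (A *v x))"
    by (intro continuous_intros linear_continuous_on) (simp add: bounded_linear_def)
  then obtain u where u: "u \<in> K" and umax: "\<And>y. y \<in> K \<Longrightarrow> y \<bullet> (A *v y) \<le> u \<bullet> (A *v u)"
    using continuous_attains_sup[OF \<open>compact K\<close> \<open>K \<noteq> {}\<close>] by blast
  define l where "l = u \<bullet> (A *v u)"
  have uW: "u \<in> W" and un: "norm u = 1" using u unfolding K_def by auto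
  have uu: "u \<bullet> u = 1" using un by (simp add: norm_eq_1)
  have ray: "y \<bullet> (A *v y) \<le> l * (y \<bullet> y)" if "y \<in> W" for y
  proof (cases "y = 0")
    case True then show ?thesis by simp
  next
    case False
    have "y /\<^sub>R norm y \<in> K" unfolding K_def using that False W by (simp add: subspace_scale)
    then have "(y /\<^sub>R norm y) \<bullet> (A *v (y /\<^sub>R norm y)) \<le> l" using umax l_def by blast
    then have "(y \<bullet> (A *v y)) / (norm y)^2 \<le> l"
      by (simp add: matrix_vector_mult_scaleR power2_eq_square divide_inverse mult.commute mult.left_commute)
    moreover have "(norm y)^2 > 0" using False by simp
    ultimately show ?thesis by (simp add: divide_le_eq power2_norm_eq_inner)
  qed
  have orth: "w \<bullet> (A *v u) = 0" if wW: "w \<in> W" and wu: "w \<bullet> u = 0" for w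
  proof (rule quad_lemma[where C = "l * (w \<bullet> w) - w \<bullet> (A *v w)"])
    fix t :: real
    have "u + t *\<^sub>R w \<in> W" using uW wW W by (simp add: subspace_add subspace_scale)
    then have h1: "(u + t *\<^sub>R w) \<bullet> (A *v (u + t *\<^sub>R w)) \<le> l * ((u + t *\<^sub>R w) \<bullet> (u + t *\<^sub>R w))"
      by (rule ray)
    have h2: "(u + t *\<^sub>R w) \<bullet> (A *v (u + t *\<^sub>R w)) = l + 2 * t * (w \<bullet> (A *v u)) + t * t * (w \<bullet> (A *v w))"
    proof -
      have "u \<bullet> (A *v w) = w \<bullet> (A *v u)" using sym_inner[OF sym, of u w] by (simp add: inner_commute)
      moreover have "(A *v u) \<bullet> w = w \<bullet> (A *v u)" by (simp add: inner_commute)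
      ultimately show ?thesis
        by (simp add: matrix_vector_right_distrib matrix_vector_mult_scaleR inner_add_left inner_add_right l_def algebra_simps)
    qed
    have h3: "(u + t *\<^sub>R w) \<bullet> (u + t *\<^sub>R w) = 1 + t * t * (w \<bullet> w)"
      using uu wu by (simp add: inner_add_left inner_add_right inner_commute[of u w] algebra_simps)
    have h4: "l + 2 * t * (w \<bullet> (A *v u)) + t * t * (w \<bullet> (A *v w)) \<le> l * (1 + t * t * (w \<bullet> w))"
      using h1 unfolding h2 h3 .
    then show "2 * t * (w \<bullet> (A *v u)) \<le> t * t * (l * (w \<bullet> w) - w \<bullet> (A *v w))"
      by (simp add: algebra_simps)
  qed
  define r where "r = A *v u - l *\<^sub>R u"
  have rW: "r \<in> W" unfolding r_def using inv uW W by (simp add: subspace_diff subspace_scale)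
  have ru: "r \<bullet> u = 0" unfolding r_def using uu l_def by (simp add: inner_diff_left inner_commute[of "A *v u" u])
  have "r \<bullet> r = r \<bullet> (A *v u) - l * (r \<bullet> u)" unfolding r_def
    by (simp add: inner_diff_right)
  also have "\<dots> = 0" using orth[OF rW ru] ru by simp
  finally have "r = 0" by simp
  then have "A *v u = l *\<^sub>R u" unfolding r_def by simp
  moreover have "u \<noteq> 0" using un by auto
  ultimately show ?thesis using uW by blast
qed

lemma spectral:
  fixes A :: "real^'n^'n"
  assumes sym: "transpose A = A"
  shows "subspace W \<Longrightarrow> \<forall>w\<in>W. A *v w \<in> W \<Longrightarrow>
     \<exists>B. B \<subseteq> W \<and> pairwise orthogonal B \<and> 0 \<notin> B \<and> span B = W \<and> (\<forall>b\<in>B. \<exists>\<mu>. A *v b = \<mu> *\<^sub>R b)"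
proof (induction "dim W" arbitrary: W rule: less_induct)
  case less
  show ?case
  proof (cases "W = {0}")
    case True
    then show ?thesis by (intro exI[of _ "{}"]) auto
  next
    case False
    obtain u \<mu> where u: "u \<in> W" "u \<noteq> 0" "A *v u = \<mu> *\<^sub>R u"
      using eigen_exists[OF sym less.prems False] by blast
    define W' where "W' = {w \<in> W. u \<bullet> w = 0}"
    have W'sub: "subspace W'" unfolding W'_def using less.prems(1)
      by (auto simp: subspace_def inner_add_right)
    have W'inv: "\<forall>w\<in>W'. A *v w \<in> W'"
    proof
      fix w assume "w \<in> W'"
      then have "w \<in> W" "u \<bullet> w = 0" unfolding W'_def by auto
      moreover have "u \<bullet> (A *v w) = (A *v u) \<bullet> w" using sym_inner[OF sym, of u w] by simp
      ultimately show "A *v w \<in> W'" unfolding W'_def using less.prems(2) u by auto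
    qed
    have "u \<notin> W'" using u unfolding W'_def by auto
    then have "W' \<subset> W" using u unfolding W'_def by blast
    moreover have "span W' = W'" "span W = W" using W'sub less.prems(1) by (auto simp: span_eq_iff)
    ultimately have "span W' \<subset> span W" by (simp only:)
    then have "dim W' < dim W" by (rule dim_psubset)
    then obtain B' where B': "B' \<subseteq> W'" "pairwise orthogonal B'" "0 \<notin> B'" "span B' = W'"
      "\<forall>b\<in>B'. \<exists>\<mu>. A *v b = \<mu> *\<^sub>R b"
      using less.hyps W'sub W'inv by blast
    show ?thesis
    proof (intro exI[of _ "insert u B'"] conjI)
      show "insert u B' \<subseteq> W" using u B'(1) unfolding W'_def by auto
      show "pairwise orthogonal (insert u B')"
        using B'(1,2) u unfolding W'_def pairwise_insert
        by (auto simp: orthogonal_def inner_commute)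
      show "0 \<notin> insert u B'" using u B' by auto
      show "\<forall>b\<in>insert u B'. \<exists>\<mu>. A *v b = \<mu> *\<^sub>R b" using u B' by auto
      show "span (insert u B') = W"
      proof
        show "span (insert u B') \<subseteq> W"
          using u B'(1) less.prems(1) unfolding W'_def by (intro span_minimal) auto
        show "W \<subseteq> span (insert u B')"
        proof
          fix w assume wW: "w \<in> W"
          define c where "c = (u \<bullet> w) / (u \<bullet> u)"
          have "w - c *\<^sub>R u \<in> W'" unfolding W'_def c_def using wW u less.prems(1)
            by (simp add: subspace_diff subspace_scale inner_diff_right)
          then have "w - c *\<^sub>R u \<in> span (insert u B')" using B'(4) span_mono[of B' "insert u B'"] by auto
          moreover have "c *\<^sub>R u \<in> span (insert u B')" by (simp add: span_base span_scale)
          ultimately have "(w - c *\<^sub>R u) + c *\<^sub>R u \<in> span (insert u B')" by (rule span_add)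
          then show "w \<in> span (insert u B')" by simp
        qed
      qed
    qed
  qed
qed

lemma inner_W:
  fixes S :: "(real^'n) set"
  assumes "s \<in> S" "w \<in> orthogonal_comp S"
  shows "s \<bullet> w = 0" "w \<bullet> s = 0"
  using assms by (auto simp: orthogonal_comp_def orthogonal_def inner_commute)

lemma orth_sum:
  fixes B :: "(real^'n) set"
  assumes "finite B" "pairwise orthogonal B"
  shows "(\<Sum>b\<in>B. f b *\<^sub>R b) \<bullet> (\<Sum>b\<in>B. g b *\<^sub>R b) = (\<Sum>b\<in>B. f b * g b * (b \<bullet> b))"
proof -
  have "(\<Sum>b\<in>B. f b *\<^sub>R b) \<bullet> (\<Sum>b\<in>B. g b *\<^sub>R b) = (\<Sum>b\<in>B. \<Sum>c\<in>B. f c * g b * (c \<bullet> b))"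
    by (simp add: inner_sum_left inner_sum_right sum_distrib_left sum_distrib_right mult.assoc mult.left_commute)
  also have "\<dots> = (\<Sum>b\<in>B. \<Sum>c\<in>B. if c = b then f b * g b * (b \<bullet> b) else 0)"
    using assms(2) by (intro sum.cong refl) (auto simp: pairwise_def orthogonal_def)
  also have "\<dots> = (\<Sum>b\<in>B. f b * g b * (b \<bullet> b))"
    using assms(1) by simp
  finally show ?thesis .
qed

lemma Mclass_facts:
  fixes S :: "(real^'n) set" and M :: "real^'n^'n"
  assumes S: "subspace S" and M: "M_class S lm lp M" and lp: "lp < 1"
  shows "transpose M = M" "\<forall>s\<in>S. M *v s = s" "\<forall>w\<in>orthogonal_comp S. M *v w \<in> orthogonal_comp S"
    "\<forall>w\<in>orthogonal_comp S. (M *v w - lm *\<^sub>R w) \<bullet> (M *v w - lp *\<^sub>R w) \<le> 0"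
proof -
  have sym: "transpose M = M" using M unfolding M_class_def by blast
  obtain v :: "'n \<Rightarrow> real^'n" and mu J where v: "inj v" "independent (range v)" "span (range v) = UNIV"
    "\<forall>i. M *v v i = mu i *\<^sub>R v i" "span (v ` J) = S" "\<forall>i\<in>J. mu i = 1"
    "\<forall>i. i \<notin> J \<longrightarrow> lm \<le> mu i \<and> mu i \<le> lp"
    using M unfolding M_class_def by blast
  show "transpose M = M" by (rule sym)
  have "span (v ` J) \<subseteq> {x. M *v x = x}"
  proof (rule span_minimal)
    show "v ` J \<subseteq> {x. M *v x = x}" using v(4,6) by auto
    show "subspace {x. M *v x = x}"
      by (auto simp: subspace_def matrix_vector_right_distrib matrix_vector_mult_scaleR)
  qed
  then show fixS: "\<forall>s\<in>S. M *v s = s" using v(5) by auto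
  define W where "W = orthogonal_comp S"
  have W: "subspace W" unfolding W_def by (rule subspace_orthogonal_comp)
  show inv: "\<forall>w\<in>orthogonal_comp S. M *v w \<in> orthogonal_comp S"
  proof
    fix w assume w: "w \<in> orthogonal_comp S"
    have "s \<bullet> (M *v w) = 0" if "s \<in> S" for s
    proof -
      have "s \<bullet> (M *v w) = (M *v s) \<bullet> w" using sym_inner[OF sym, of s w] by simp
      also have "\<dots> = s \<bullet> w" using fixS that by simp
      also have "\<dots> = 0" using inner_W[OF that w] by simp
      finally show ?thesis .
    qed
    then show "M *v w \<in> orthogonal_comp S" by (auto simp: orthogonal_comp_def orthogonal_def)
  qed
  have invW: "\<forall>w\<in>W. M *v w \<in> W" using inv unfolding W_def .
  obtain B where B: "B \<subseteq> W" "pairwise orthogonal B" "0 \<notin> B" "span B = W"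
    "\<forall>b\<in>B. \<exists>\<mu>. M *v b = \<mu> *\<^sub>R b"
    using spectral[OF sym W invW] by blast
  have finB: "finite B" using pairwise_orthogonal_independent[OF B(2,3)] by (rule independent_imp_finite)
  define ev where "ev b = (b \<bullet> (M *v b)) / (b \<bullet> b)" for b
  have evb: "M *v b = ev b *\<^sub>R b" if bB: "b \<in> B" for b
  proof -
    obtain \<mu> where "M *v b = \<mu> *\<^sub>R b" using bspec[OF B(5) bB] by blast
    moreover have "b \<bullet> b \<noteq> 0" using B(3) bB by auto
    ultimately show ?thesis unfolding ev_def by simp
  qed
  have evbound: "lm \<le> ev b \<and> ev b \<le> lp" if b: "b \<in> B" for b
  proof -
    have "\<exists>i. i \<notin> J \<and> ev b = mu i"
    proof (rule ccontr)
      assume "\<not> ?thesis"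
      then have ne: "\<And>i. i \<notin> J \<Longrightarrow> ev b \<noteq> mu i" by blast
      have "range v \<subseteq> {x. b \<bullet> x = 0}"
      proof
        fix x assume "x \<in> range v"
        then obtain i where x: "x = v i" by blast
        show "x \<in> {x. b \<bullet> x = 0}"
        proof (cases "i \<in> J")
          case True
          then have "v i \<in> span (v ` J)" by (intro span_base) simp
          then have viS: "v i \<in> S" using v(5) by simp
          have "b \<in> orthogonal_comp S" using B(1) b unfolding W_def by blast
          then show ?thesis using inner_W(2)[OF viS] x by simp
        next
          case False
          have "ev b * (b \<bullet> v i) = (M *v b) \<bullet> v i" using evb[OF b] by simp
          also have "\<dots> = b \<bullet> (M *v v i)" by (rule sym_inner[OF sym])
          also have "\<dots> = mu i * (b \<bullet> v i)" using v(4) by simp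
          finally have "(ev b - mu i) * (b \<bullet> v i) = 0" by (simp add: algebra_simps)
          then show ?thesis using ne[OF False] x by simp
        qed
      qed
      then have "span (range v) \<subseteq> {x. b \<bullet> x = 0}"
        by (rule span_minimal) (auto simp: subspace_def inner_add_right)
      then have "b \<in> {x. b \<bullet> x = 0}" using v(3) by blast
      then have "b \<bullet> b = 0" by simp
      then show False using B(3) b by simp
    qed
    then show ?thesis using v(7) by auto
  qed
  show "\<forall>w\<in>orthogonal_comp S. (M *v w - lm *\<^sub>R w) \<bullet> (M *v w - lp *\<^sub>R w) \<le> 0"
  proof
    fix w assume "w \<in> orthogonal_comp S"
    then have "w \<in> span B" using B(4) unfolding W_def by simp
    then obtain c where c: "w = (\<Sum>b\<in>B. c b *\<^sub>R b)" using span_finite[OF finB] by auto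
    have Mw: "M *v w = (\<Sum>b\<in>B. (c b * ev b) *\<^sub>R b)"
    proof -
      have "M *v w = (\<Sum>b\<in>B. c b *\<^sub>R (M *v b))" unfolding c
        by (simp add: linear_sum[OF matrix_vector_mul_linear] matrix_vector_mult_scaleR)
      also have "\<dots> = (\<Sum>b\<in>B. (c b * ev b) *\<^sub>R b)" by (intro sum.cong refl) (simp add: evb)
      finally show ?thesis .
    qed
    have e1: "M *v w - lm *\<^sub>R w = (\<Sum>b\<in>B. (c b * (ev b - lm)) *\<^sub>R b)"
      unfolding Mw unfolding c scaleR_sum_right sum_subtractf[symmetric] scaleR_scaleR by (intro sum.cong refl) (simp add: algebra_simps)
    have e2: "M *v w - lp *\<^sub>R w = (\<Sum>b\<in>B. (c b * (ev b - lp)) *\<^sub>R b)"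
      unfolding Mw unfolding c scaleR_sum_right sum_subtractf[symmetric] scaleR_scaleR by (intro sum.cong refl) (simp add: algebra_simps)
    have "(M *v w - lm *\<^sub>R w) \<bullet> (M *v w - lp *\<^sub>R w) =
        (\<Sum>b\<in>B. (c b * (ev b - lm)) * (c b * (ev b - lp)) * (b \<bullet> b))"
      unfolding e1 e2 by (rule orth_sum[OF finB B(2)])
    also have "\<dots> \<le> 0"
    proof (rule sum_nonpos)
      fix b assume b: "b \<in> B"
      have h1: "(ev b - lm) * (ev b - lp) \<le> 0" using evbound[OF b] by (simp add: mult_nonneg_nonpos)
      have eq: "(c b * (ev b - lm)) * (c b * (ev b - lp)) * (b \<bullet> b) = (c b * c b * (b \<bullet> b)) * ((ev b - lm) * (ev b - lp))"
        by (simp add: algebra_simps)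
      have h2: "c b * c b * (b \<bullet> b) \<ge> 0" by simp
      show "(c b * (ev b - lm)) * (c b * (ev b - lp)) * (b \<bullet> b) \<le> 0"
        unfolding eq using h2 h1 by (rule mult_nonneg_nonpos)
    qed
    finally show "(M *v w - lm *\<^sub>R w) \<bullet> (M *v w - lp *\<^sub>R w) \<le> 0" .
  qed
qed

lemma mv_axis: "(A :: real^'k^'n) *v axis k 1 = column k A"
  by (simp add: column_def matrix_vector_mult_def axis_def vec_eq_iff if_distrib cong: if_cong)

lemma vec_eq_inner:
  fixes x y :: "real^'n"
  assumes "\<And>u. u \<bullet> x = u \<bullet> y"
  shows "x = y"
proof -
  have "(x - y) \<bullet> (x - y) = 0" using assms[of "x - y"] by (simp add: inner_diff_right)
  then show ?thesis by simp
qed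

lemma neg_semidef_iff:
  fixes A B :: "real^'k^'n"
  shows "neg_semidef (transpose A ** B) \<longleftrightarrow> (\<forall>v. (A *v v) \<bullet> (B *v v) \<le> 0)"
  unfolding neg_semidef_def
  by (simp add: matrix_vector_mul_assoc[symmetric] transpose_inner)

lemma tprod_inner:
  fixes A B :: "real^'k^'n"
  shows "u \<bullet> ((transpose A ** B) *v v) = (A *v u) \<bullet> (B *v v)"
  by (metis matrix_vector_mul_assoc transpose_inner)

lemma sym_prod_iff:
  fixes A B :: "real^'k^'n"
  shows "transpose A ** B = transpose B ** A \<longleftrightarrow> (\<forall>u v. (A *v u) \<bullet> (B *v v) = (B *v u) \<bullet> (A *v v))"
proof
  assume "transpose A ** B = transpose B ** A"
  then show "\<forall>u v. (A *v u) \<bullet> (B *v v) = (B *v u) \<bullet> (A *v v)" by (metis tprod_inner)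
next
  assume h: "\<forall>u v. (A *v u) \<bullet> (B *v v) = (B *v u) \<bullet> (A *v v)"
  show "transpose A ** B = transpose B ** A"
    unfolding matrix_eq
  proof
    fix v
    show "(transpose A ** B) *v v = (transpose B ** A) *v v"
      by (rule vec_eq_inner) (simp only: tprod_inner h)
  qed
qed

lemma cols_iff:
  fixes X Y :: "real^'k^'n" and M :: "real^'n^'n"
  shows "(\<forall>k. column k Y = M *v column k X) \<longleftrightarrow> (\<forall>u. Y *v u = M *v (X *v u))"
proof
  assume h: "\<forall>k. column k Y = M *v column k X"
  show "\<forall>u. Y *v u = M *v (X *v u)"
  proof
    fix u
    have "Y *v u = (\<Sum>i\<in>UNIV. u $ i *\<^sub>R column i Y)" by (simp add: matrix_mult_sum scalar_mult_eq_scaleR)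
    also have "\<dots> = (\<Sum>i\<in>UNIV. u $ i *\<^sub>R (M *v column i X))" using h by simp
    also have "\<dots> = M *v (\<Sum>i\<in>UNIV. u $ i *\<^sub>R column i X)"
      by (simp add: linear_sum[OF matrix_vector_mul_linear] matrix_vector_mult_scaleR)
    also have "\<dots> = M *v (X *v u)" by (simp add: matrix_mult_sum scalar_mult_eq_scaleR)
    finally show "Y *v u = M *v (X *v u)" .
  qed
next
  assume "\<forall>u. Y *v u = M *v (X *v u)"
  then show "\<forall>k. column k Y = M *v column k X" by (metis mv_axis)
qed

lemma forward:
  fixes S :: "(real^'n) set" and lm lp :: real and X Y :: "real^'k^'n"
  assumes S: "subspace S" and lp: "lp < 1" and I: "interpolable S lm lp X Y"
  shows "(let Xb = proj_cols S X; Yb = proj_cols S Y; Xp = X - Xb; Yp = Y - Yb in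
       Xb = Yb \<and>
       neg_semidef (transpose (Yp - lm *\<^sub>R Xp) ** (Yp - lp *\<^sub>R Xp)) \<and>
       transpose Xp ** Yp = transpose Yp ** Xp)"
proof -
  obtain M where M: "M_class S lm lp M" and cols: "\<forall>k. column k Y = M *v column k X"
    using I unfolding interpolable_def by blast
  have YX: "\<And>u. Y *v u = M *v (X *v u)" using cols cols_iff by blast
  note F = Mclass_facts[OF S M lp]
  define pr where "pr = orth_proj S"
  have prc: "\<And>x. pr x \<in> S" "\<And>x. x - pr x \<in> orthogonal_comp S"
    using orth_proj_char[OF S] unfolding pr_def by auto
  have key: "pr (M *v x) = pr x \<and> M *v x - pr (M *v x) = M *v (x - pr x)" for x
  proof -
    have "M *v x = pr x + M *v (x - pr x)"
      using F(2) prc(1)[of x] by (metis add_diff_cancel_left' diff_add_cancel matrix_vector_right_distrib)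
    moreover have "M *v (x - pr x) \<in> orthogonal_comp S" using F(3) prc(2) by blast
    ultimately have "pr (M *v x) = pr x" unfolding pr_def
      by (intro orth_proj_unique[OF S]) (auto simp: prc(1)[unfolded pr_def])
    then show ?thesis using \<open>M *v x = pr x + M *v (x - pr x)\<close> by simp
  qed
  have Xb: "\<And>u. proj_cols S X *v u = pr (X *v u)" and Yb: "\<And>u. proj_cols S Y *v u = pr (Y *v u)"
    using proj_cols_mult[OF S] unfolding pr_def by auto
  have Xp: "(X - proj_cols S X) *v u = X *v u - pr (X *v u)" for u
    by (simp add: matrix_vector_mult_diff_rdistrib Xb)
  have Yp: "(Y - proj_cols S Y) *v u = M *v (X *v u - pr (X *v u))" for u
  proof -
    have "(Y - proj_cols S Y) *v u = M *v (X *v u) - pr (M *v (X *v u))"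
      by (simp add: matrix_vector_mult_diff_rdistrib Yb YX)
    then show ?thesis using key[of "X *v u"] by metis
  qed
  have wW: "\<And>u. X *v u - pr (X *v u) \<in> orthogonal_comp S" using prc by simp
  have 1: "proj_cols S X = proj_cols S Y"
    unfolding matrix_eq using key by (simp add: Xb Yb YX)
  have 2: "neg_semidef (transpose ((Y - proj_cols S Y) - lm *\<^sub>R (X - proj_cols S X)) **
       ((Y - proj_cols S Y) - lp *\<^sub>R (X - proj_cols S X)))"
    unfolding neg_semidef_iff
  proof
    fix v
    have sp: "(A - c *\<^sub>R B) *v v = A *v v - c *\<^sub>R (B *v v)" for A B :: "real^'k^'n" and c
      by (metis matrix_vector_mult_diff_rdistrib scaleR_matrix_vector_assoc)
    show "(((Y - proj_cols S Y) - lm *\<^sub>R (X - proj_cols S X)) *v v) \<bullet> (((Y - proj_cols S Y) - lp *\<^sub>R (X - proj_cols S X)) *v v) \<le> 0"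
      unfolding sp Xp Yp using F(4) wW by blast
  qed
  have 3: "transpose (X - proj_cols S X) ** (Y - proj_cols S Y) = transpose (Y - proj_cols S Y) ** (X - proj_cols S X)"
    unfolding sym_prod_iff Xp Yp
    by (metis F(1) sym_inner inner_commute)
  show ?thesis using 1 2 3 by (simp add: Let_def)
qed

lemma matrix_apply:
  fixes f :: "real^'m \<Rightarrow> real^'n"
  shows "linear f \<Longrightarrow> matrix f *v x = f x"
  by (metis matrix_vector_mul(2))

lemma sym_from_inner:
  fixes A :: "real^'n^'n"
  assumes "\<And>x y. x \<bullet> (A *v y) = (A *v x) \<bullet> y"
  shows "transpose A = A"
  unfolding matrix_eq
proof
  fix x
  show "transpose A *v x = A *v x"
    by (rule vec_eq_inner) (metis assms transpose_inner)
qed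

lemma test_inv:
  fixes G :: "real^'k^'k"
  shows "\<exists>g. linear g \<and> (\<forall>y\<in>range ((*v) G). G *v g y = y)"
  using linear_exists_right_inverse_on[OF matrix_vector_mul_linear[of G] subspace_UNIV]
  by auto

lemma range_sub:
  fixes G :: "real^'k^'k" and Y :: "real^'k^'n"
  assumes Gs: "transpose G = G" and ker: "\<And>n. G *v n = 0 \<Longrightarrow> Y *v n = 0"
  shows "transpose Y *v w \<in> range ((*v) G)"
proof -
  define Rg where "Rg = range ((*v) G)"
  have sub: "subspace Rg" unfolding Rg_def
    by (rule linear_subspace_image[OF matrix_vector_mul_linear subspace_UNIV])
  define y where "y = transpose Y *v w"
  define p where "p = orth_proj Rg y"
  have p: "p \<in> Rg" "y - p \<in> orthogonal_comp Rg" using orth_proj_char[OF sub] unfolding p_def by auto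
  define nn where "nn = y - p"
  have "\<forall>x. (G *v x) \<bullet> nn = 0" using p(2) unfolding nn_def Rg_def orthogonal_comp_def orthogonal_def by auto
  then have "(G *v (G *v nn)) \<bullet> nn = 0" by blast
  then have "(G *v nn) \<bullet> (G *v nn) = 0" using transpose_inner[of G "G *v nn" nn] Gs by simp
  then have "G *v nn = 0" by simp
  then have "Y *v nn = 0" by (rule ker)
  then have "y \<bullet> nn = 0" unfolding y_def using transpose_inner[of "transpose Y" w nn] by simp
  moreover have "p \<bullet> nn = 0" using p unfolding nn_def orthogonal_comp_def orthogonal_def by auto
  ultimately have "nn \<bullet> nn = 0" unfolding nn_def by (simp add: inner_diff_left)
  then have "y = p" unfolding nn_def by simp
  then show ?thesis using p(1) unfolding y_def Rg_def by simp
qed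

lemma Q_exists:
  fixes S :: "(real^'n) set" and P R :: "real^'k^'n" and a b :: real
  assumes S: "subspace S" and ab: "a < b"
    and PW: "\<And>u. P *v u \<in> orthogonal_comp S" and RW: "\<And>u. R *v u \<in> orthogonal_comp S"
    and sym: "\<And>u v. (P *v u) \<bullet> (R *v v) = (R *v u) \<bullet> (P *v v)"
    and neg: "\<And>u. (R *v u - a *\<^sub>R (P *v u)) \<bullet> (R *v u - b *\<^sub>R (P *v u)) \<le> 0"
  shows "\<exists>Q :: real^'n^'n. transpose Q = Q \<and> (\<forall>x. 0 \<le> x \<bullet> (Q *v x) \<and> x \<bullet> (Q *v x) \<le> x \<bullet> x)
     \<and> (\<forall>x. Q *v x \<in> orthogonal_comp S) \<and> (\<forall>s\<in>S. Q *v s = 0)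
     \<and> (\<forall>u. (b - a) *\<^sub>R (Q *v (P *v u)) = R *v u - a *\<^sub>R (P *v u))"
proof -
  define W where "W = orthogonal_comp S"
  have W: "subspace W" unfolding W_def by (rule subspace_orthogonal_comp)
  define Y where "Y = (1 / (b - a)) *\<^sub>R (R - a *\<^sub>R P)"
  have ba: "b - a > 0" using ab by simp
  have Yu: "Y *v u = (1 / (b - a)) *\<^sub>R (R *v u - a *\<^sub>R (P *v u))" for u
    unfolding Y_def by (metis matrix_vector_mult_diff_rdistrib scaleR_matrix_vector_assoc)
  have RY: "R *v u - a *\<^sub>R (P *v u) = (b - a) *\<^sub>R (Y *v u)" for u
    using ba by (simp add: Yu)
  have YW: "Y *v u \<in> W" for u
    unfolding Yu W_def using PW RW subspace_orthogonal_comp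
    by (metis subspace_diff subspace_scale)
  define G where "G = transpose P ** Y"
  have Ginner: "x \<bullet> (G *v y) = (P *v x) \<bullet> (Y *v y)" for x y
    unfolding G_def by (rule tprod_inner)
  have Gsym1: "(P *v x) \<bullet> (Y *v y) = (P *v y) \<bullet> (Y *v x)" for x y
  proof -
    have "(P *v x) \<bullet> (R *v y) = (P *v y) \<bullet> (R *v x)" using sym[of x y] by (simp add: inner_commute)
    then show ?thesis unfolding Yu
      by (simp add: inner_diff_right inner_commute)
  qed
  have Gs: "transpose G = G"
    by (rule sym_from_inner) (metis Ginner Gsym1 inner_commute)
  have psd: "(Y *v u) \<bullet> (Y *v u) \<le> (P *v u) \<bullet> (Y *v u)" for u
  proof -
    define t where "t = Y *v u"
    define p where "p = P *v u"
    have e1: "R *v u - a *\<^sub>R (P *v u) = (b - a) *\<^sub>R t" unfolding t_def by (rule RY)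
    have e2: "R *v u - b *\<^sub>R (P *v u) = (b - a) *\<^sub>R (t - p)"
      using e1 unfolding p_def by (simp add: algebra_simps)
    have "((b - a) * (b - a)) * (t \<bullet> (t - p)) \<le> 0" using neg[of u] unfolding e1 e2 by (simp add: algebra_simps)
    moreover have "(b - a) * (b - a) > 0" using ba by simp
    ultimately have "t \<bullet> (t - p) \<le> 0" by (metis mult_le_cancel_left_pos mult_zero_right)
    then show ?thesis unfolding t_def p_def by (simp add: inner_diff_right inner_commute)
  qed
  have Gpsd: "(Y *v u) \<bullet> (Y *v u) \<le> u \<bullet> (G *v u)" for u using psd Ginner by simp
  have ker: "G *v n = 0 \<Longrightarrow> Y *v n = 0" for n
  proof -
    assume "G *v n = 0"
    then have "(Y *v n) \<bullet> (Y *v n) \<le> 0" using Gpsd[of n] by simp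
    then show "Y *v n = 0" by (metis inner_eq_zero_iff inner_ge_zero order_antisym)
  qed
  obtain g where g: "linear g" "\<forall>y\<in>range ((*v) G). G *v g y = y"
    using linear_exists_right_inverse_on[OF matrix_vector_mul_linear[of G] subspace_UNIV] by auto
  define z where "z x = g (transpose Y *v x)" for x
  have Gz: "G *v z x = transpose Y *v x" for x
    unfolding z_def using g(2) range_sub[OF Gs ker] by blast
  define Q where "Q = Y ** matrix g ** transpose Y"
  have Qx: "Q *v x = Y *v z x" for x
    unfolding Q_def z_def by (simp add: matrix_vector_mul_assoc[symmetric] matrix_apply[OF g(1)])
  have Qinner: "x \<bullet> (Q *v y) = z x \<bullet> (G *v z y)" for x y
  proof -
    have "x \<bullet> (Q *v y) = (transpose Y *v x) \<bullet> z y" unfolding Qx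
      by (metis inner_commute transpose_inner transpose_transpose)
    also have "\<dots> = (G *v z x) \<bullet> z y" by (simp add: Gz)
    also have "\<dots> = z x \<bullet> (G *v z y)" using transpose_inner[of G "z x" "z y"] Gs by simp
    finally show ?thesis .
  qed
  have QT: "transpose Q = Q"
  proof (rule sym_from_inner)
    fix x y
    have "x \<bullet> (Q *v y) = z x \<bullet> (G *v z y)" by (rule Qinner)
    also have "\<dots> = z y \<bullet> (G *v z x)" using Ginner Gsym1 by simp
    also have "\<dots> = y \<bullet> (Q *v x)" by (rule Qinner[symmetric])
    finally show "x \<bullet> (Q *v y) = (Q *v x) \<bullet> y" by (simp add: inner_commute)
  qed
  have bounds: "0 \<le> x \<bullet> (Q *v x) \<and> x \<bullet> (Q *v x) \<le> x \<bullet> x" for x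
  proof -
    define c where "c = x \<bullet> (Q *v x)"
    define t where "t = Y *v z x"
    have c1: "t \<bullet> t \<le> c" unfolding c_def t_def Qinner using Gpsd by simp
    have c0: "0 \<le> c" using c1 by (meson inner_ge_zero order_trans)
    have c2: "c = x \<bullet> t" unfolding c_def t_def Qx ..
    have "c \<le> x \<bullet> x"
    proof (cases "c = 0")
      case True then show ?thesis by simp
    next
      case False
      then have cpos: "c > 0" using c0 by simp
      have "c * c \<le> (norm x * norm t) * (norm x * norm t)"
      proof -
        have "\<bar>c\<bar> \<le> norm x * norm t" unfolding c2 by (rule Cauchy_Schwarz_ineq2)
        then show ?thesis using c0 by (simp add: mult_mono)
      qed
      also have "\<dots> = (x \<bullet> x) * (t \<bullet> t)" by (simp add: power2_norm_eq_inner[symmetric] power2_eq_square algebra_simps)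
      also have "\<dots> \<le> (x \<bullet> x) * c" using c1 by (simp add: mult_left_mono)
      finally have "c * c \<le> (x \<bullet> x) * c" .
      then show ?thesis using cpos by (simp add: mult_le_cancel_right)
    qed
    then show ?thesis using c0 unfolding c_def by simp
  qed
  have QW: "Q *v x \<in> W" for x unfolding Qx by (rule YW)
  have QS: "Q *v s = 0" if s: "s \<in> S" for s
  proof -
    have "transpose Y *v s = 0"
    proof (rule vec_eq_inner)
      fix u
      have "u \<bullet> (transpose Y *v s) = (Y *v u) \<bullet> s" using transpose_inner[of Y u s] by simp
      also have "\<dots> = 0" using inner_W(2)[OF s YW[of u, unfolded W_def]] .
      finally show "u \<bullet> (transpose Y *v s) = u \<bullet> 0" by simp
    qed
    then show ?thesis unfolding Qx z_def using linear_0[OF g(1)] by simp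
  qed
  have QP: "(b - a) *\<^sub>R (Q *v (P *v u)) = R *v u - a *\<^sub>R (P *v u)" for u
  proof -
    have "transpose Y *v (P *v u) = G *v u"
    proof (rule vec_eq_inner)
      fix v
      have "v \<bullet> (transpose Y *v (P *v u)) = (Y *v v) \<bullet> (P *v u)" using transpose_inner[of Y v "P *v u"] by simp
      also have "\<dots> = (P *v u) \<bullet> (Y *v v)" by (simp add: inner_commute)
      also have "\<dots> = (P *v v) \<bullet> (Y *v u)" by (rule Gsym1)
      also have "\<dots> = v \<bullet> (G *v u)" by (simp add: Ginner)
      finally show "v \<bullet> (transpose Y *v (P *v u)) = v \<bullet> (G *v u)" .
    qed
    then have "G *v (z (P *v u) - u) = 0" using Gz[of "P *v u"] by (simp add: matrix_vector_mult_diff_distrib)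
    then have "Y *v (z (P *v u) - u) = 0" by (rule ker)
    then have "Q *v (P *v u) = Y *v u" unfolding Qx by (simp add: matrix_vector_mult_diff_distrib)
    then show ?thesis using RY by simp
  qed
  show ?thesis using QT bounds QW QS QP unfolding W_def by blast
qed

lemma Mclass_intro:
  fixes S :: "(real^'n) set" and T :: "real^'n^'n"
  assumes S: "subspace S" and Tsym: "transpose T = T" and TS: "\<forall>s\<in>S. T *v s = s"
    and TW: "\<forall>w\<in>orthogonal_comp S. T *v w \<in> orthogonal_comp S"
    and Teig: "\<And>w \<mu>. w \<in> orthogonal_comp S \<Longrightarrow> w \<noteq> 0 \<Longrightarrow> T *v w = \<mu> *\<^sub>R w \<Longrightarrow> lm \<le> \<mu> \<and> \<mu> \<le> lp"
  shows "M_class S lm lp T"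
proof -
  define W where "W = orthogonal_comp S"
  have W: "subspace W" unfolding W_def by (rule subspace_orthogonal_comp)
  obtain BS where BS: "BS \<subseteq> S" "pairwise orthogonal BS" "\<And>x. x \<in> BS \<Longrightarrow> norm x = 1"
    "independent BS" "card BS = dim S" "span BS = S"
    using orthonormal_basis_subspace[OF S] by blast
  have invW: "\<forall>w\<in>W. T *v w \<in> W" using TW unfolding W_def .
  obtain BW where BW: "BW \<subseteq> W" "pairwise orthogonal BW" "0 \<notin> BW" "span BW = W"
    "\<forall>b\<in>BW. \<exists>\<mu>. T *v b = \<mu> *\<^sub>R b"
    using spectral[OF Tsym W invW] by blast
  define U where "U = BS \<union> BW"
  have BS0: "0 \<notin> BS" using BS(3) by force
  have U0: "0 \<notin> U" using BS0 BW(3) unfolding U_def by blast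
  have cross: "orthogonal s w" if "s \<in> BS" "w \<in> BW" for s w
    using inner_W(1)[of s S w] BS(1) BW(1) that unfolding W_def orthogonal_def by blast
  have Uorth: "pairwise orthogonal U" unfolding U_def pairwise_def
  proof (intro ballI impI)
    fix x y assume xy: "x \<in> BS \<union> BW" "y \<in> BS \<union> BW" "x \<noteq> y"
    show "orthogonal x y"
    proof (cases "x \<in> BS")
      case True
      show ?thesis
      proof (cases "y \<in> BS")
        case True
        then show ?thesis using \<open>x \<in> BS\<close> BS(2) xy(3) unfolding pairwise_def by blast
      next
        case False
        then show ?thesis using \<open>x \<in> BS\<close> xy cross by blast
      qed
    next
      case False
      then have xW: "x \<in> BW" using xy by blast
      show ?thesis
      proof (cases "y \<in> BS")
        case True
        then show ?thesis using xW cross orthogonal_commute by blast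
      next
        case False
        then show ?thesis using xW BW(2) xy unfolding pairwise_def by blast
      qed
    qed
  qed
  have Uind: "independent U" by (rule pairwise_orthogonal_independent[OF Uorth U0])
  have Ufin: "finite U" using Uind by (rule independent_imp_finite)
  have Uspan: "span U = UNIV"
  proof -
    have "x \<in> span U" for x
    proof -
      have c: "orth_proj S x \<in> S" "x - orth_proj S x \<in> W" using orth_proj_char[OF S] unfolding W_def by auto
      have "orth_proj S x \<in> span U" using c(1) BS(6) span_mono[of BS U] unfolding U_def by blast
      moreover have "x - orth_proj S x \<in> span U" using c(2) BW(4) span_mono[of BW U] unfolding U_def by blast
      ultimately have "orth_proj S x + (x - orth_proj S x) \<in> span U" by (rule span_add)
      then show ?thesis by simp
    qed
    then show ?thesis by auto
  qed
  have "card U = dim (UNIV :: (real^'n) set)"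
    by (rule basis_card_eq_dim) (use Uind Uspan in auto)
  then have cardU: "card U = CARD('n)" by simp
  obtain h :: "'n \<Rightarrow> real^'n" where h: "bij_betw h UNIV U"
    using finite_same_card_bij[of "UNIV :: 'n set" U] Ufin cardU by auto
  have hinj: "inj h" using h by (rule bij_betw_imp_inj_on)
  have hU: "range h = U" using h by (rule bij_betw_imp_surj_on)
  define mu where "mu i = (h i \<bullet> (T *v h i)) / (h i \<bullet> h i)" for i
  have mu_eig: "T *v h i = mu i *\<^sub>R h i \<and> (\<forall>\<mu>. T *v h i = \<mu> *\<^sub>R h i \<longrightarrow> mu i = \<mu>)" for i
  proof -
    have hiU: "h i \<in> U" using hU by blast
    then have nz: "h i \<bullet> h i \<noteq> 0" using U0 by auto
    have "\<exists>\<mu>. T *v h i = \<mu> *\<^sub>R h i"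
    proof (cases "h i \<in> BS")
      case True
      then have "T *v h i = 1 *\<^sub>R h i" using TS BS(1) by auto
      then show ?thesis by blast
    next
      case False
      then show ?thesis using hiU BW(5) unfolding U_def by blast
    qed
    then obtain \<mu> where e: "T *v h i = \<mu> *\<^sub>R h i" by blast
    have mueq: "mu i = \<mu>" unfolding mu_def e using nz by simp
    have uniq: "\<forall>\<mu>'. T *v h i = \<mu>' *\<^sub>R h i \<longrightarrow> mu i = \<mu>'"
    proof (intro allI impI)
      fix \<mu>' assume "T *v h i = \<mu>' *\<^sub>R h i"
      then have "\<mu>' *\<^sub>R h i = \<mu> *\<^sub>R h i" using e by metis
      moreover have "h i \<noteq> 0" using nz by auto
      ultimately have "\<mu>' = \<mu>" by auto
      then show "mu i = \<mu>'" using \<open>mu i = \<mu>\<close> by simp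
    qed
    have "T *v h i = mu i *\<^sub>R h i" using e mueq by simp
    then show ?thesis using uniq by blast
  qed
  define J where "J = {i. h i \<in> BS}"
  have hJ: "h ` J = BS"
  proof
    show "h ` J \<subseteq> BS" unfolding J_def by auto
    show "BS \<subseteq> h ` J"
    proof
      fix b assume bB: "b \<in> BS"
      then have "b \<in> range h" using hU unfolding U_def by auto
      then obtain i where "b = h i" by auto
      then show "b \<in> h ` J" using bB unfolding J_def by auto
    qed
  qed
  have cardJ: "card J = dim S"
  proof -
    have "card (h ` J) = card J" using hinj by (simp add: card_image inj_on_subset)
    then show ?thesis using hJ BS(5) by simp
  qed
  show ?thesis unfolding M_class_def
  proof (intro conjI exI[of _ h] exI[of _ mu] exI[of _ J])
    show "transpose T = T" by (rule Tsym)
    show "inj h" by (rule hinj)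
    show "independent (range h)" using hU Uind by simp
    show "span (range h) = UNIV" using hU Uspan by simp
    show "\<forall>i. T *v h i = mu i *\<^sub>R h i" using mu_eig by blast
    show "card J = dim S" by (rule cardJ)
    show "independent (h ` J)" using hJ BS(4) by simp
    show "span (h ` J) = S" using hJ BS(6) by simp
    show "\<forall>i\<in>J. mu i = 1"
    proof
      fix i assume "i \<in> J"
      then have "T *v h i = 1 *\<^sub>R h i" using TS BS(1) unfolding J_def by auto
      then show "mu i = 1" using mu_eig by blast
    qed
    show "\<forall>i. i \<notin> J \<longrightarrow> lm \<le> mu i \<and> mu i \<le> lp"
    proof (intro allI impI)
      fix i assume "i \<notin> J"
      then have "h i \<in> BW" using hU unfolding J_def U_def by blast
      then have "h i \<in> orthogonal_comp S" "h i \<noteq> 0" using BW(1,3) unfolding W_def by auto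
      then show "lm \<le> mu i \<and> mu i \<le> lp" using Teig mu_eig by blast
    qed
  qed
qed

lemma backward:
  fixes S :: "(real^'n) set" and lm lp :: real and X Y :: "real^'k^'n"
  assumes S: "subspace S" and le: "lm \<le> lp"
    and H: "(let Xb = proj_cols S X; Yb = proj_cols S Y; Xp = X - Xb; Yp = Y - Yb in
       Xb = Yb \<and>
       neg_semidef (transpose (Yp - lm *\<^sub>R Xp) ** (Yp - lp *\<^sub>R Xp)) \<and>
       transpose Xp ** Yp = transpose Yp ** Xp)"
  shows "interpolable S lm lp X Y"
proof -
  define P where "P = X - proj_cols S X"
  define R where "R = Y - proj_cols S Y"
  have H1: "proj_cols S X = proj_cols S Y"
    and H2: "neg_semidef (transpose (R - lm *\<^sub>R P) ** (R - lp *\<^sub>R P))"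
    and H3: "transpose P ** R = transpose R ** P"
    using H unfolding P_def R_def Let_def by auto
  define pr where "pr = orth_proj S"
  define W where "W = orthogonal_comp S"
  have Wsub: "subspace W" unfolding W_def by (rule subspace_orthogonal_comp)
  have prc: "\<And>x. pr x \<in> S" "\<And>x. x - pr x \<in> W"
    using orth_proj_char[OF S] unfolding pr_def W_def by auto
  have prlin: "linear pr" unfolding pr_def by (rule orth_proj_linear[OF S])
  have Pu: "P *v u = X *v u - pr (X *v u)" for u
    unfolding P_def by (simp add: matrix_vector_mult_diff_rdistrib proj_cols_mult[OF S] pr_def)
  have Ru: "R *v u = Y *v u - pr (X *v u)" for u
    unfolding R_def using H1 by (simp add: matrix_vector_mult_diff_rdistrib proj_cols_mult[OF S] pr_def[symmetric] H1[symmetric])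
  have prY: "pr (Y *v u) = pr (X *v u)" for u
    using H1 proj_cols_mult[OF S] unfolding pr_def by metis
  have PW: "P *v u \<in> W" for u unfolding Pu by (rule prc(2))
  have RW: "R *v u \<in> W" for u unfolding Ru prY[symmetric] by (rule prc(2))
  have sym: "(P *v u) \<bullet> (R *v v) = (R *v u) \<bullet> (P *v v)" for u v
    using H3 unfolding sym_prod_iff by blast
  have sp: "(A - c *\<^sub>R B) *v v = A *v v - c *\<^sub>R (B *v v)" for A B :: "real^'k^'n" and c v
    by (metis matrix_vector_mult_diff_rdistrib scaleR_matrix_vector_assoc)
  have neg: "(R *v u - lm *\<^sub>R (P *v u)) \<bullet> (R *v u - lp *\<^sub>R (P *v u)) \<le> 0" for u
    using H2 unfolding neg_semidef_iff sp by blast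
  have "\<exists>Q :: real^'n^'n. transpose Q = Q \<and> (\<forall>x. 0 \<le> x \<bullet> (Q *v x) \<and> x \<bullet> (Q *v x) \<le> x \<bullet> x)
     \<and> (\<forall>x. Q *v x \<in> orthogonal_comp S) \<and> (\<forall>s\<in>S. Q *v s = 0)
     \<and> (\<forall>u. (lp - lm) *\<^sub>R (Q *v (P *v u)) = R *v u - lm *\<^sub>R (P *v u))"
  proof (cases "lm < lp")
    case True
    show ?thesis by (rule Q_exists[OF S True PW[unfolded W_def] RW[unfolded W_def] sym neg])
  next
    case False
    then have eq: "lp = lm" using le by simp
    have "R *v u - lm *\<^sub>R (P *v u) = 0" for u
    proof -
      have "(R *v u - lm *\<^sub>R (P *v u)) \<bullet> (R *v u - lm *\<^sub>R (P *v u)) \<le> 0" using neg[of u] eq by simp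
      then show ?thesis by (metis inner_eq_zero_iff inner_ge_zero order_antisym)
    qed
    then show ?thesis using eq
      by (intro exI[of _ "0 :: real^'n^'n"]) (auto simp: subspace_0[OF subspace_orthogonal_comp] transpose_def vec_eq_iff)
  qed
  then obtain Q :: "real^'n^'n" where QT: "transpose Q = Q" and Qb: "\<And>x. 0 \<le> x \<bullet> (Q *v x) \<and> x \<bullet> (Q *v x) \<le> x \<bullet> x"
    and QW: "\<And>x. Q *v x \<in> W" and QS: "\<And>s. s \<in> S \<Longrightarrow> Q *v s = 0"
    and QP: "\<And>u. (lp - lm) *\<^sub>R (Q *v (P *v u)) = R *v u - lm *\<^sub>R (P *v u)"
    unfolding W_def by blast
  define T where "T = matrix pr + lm *\<^sub>R (mat 1 - matrix pr) + (lp - lm) *\<^sub>R Q"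
  have Tx: "T *v x = pr x + lm *\<^sub>R (x - pr x) + (lp - lm) *\<^sub>R (Q *v x)" for x
    unfolding T_def
    by (simp add: matrix_vector_mult_add_rdistrib matrix_vector_mult_diff_rdistrib
        scaleR_matrix_vector_assoc[symmetric] matrix_apply[OF prlin])
  have prS: "pr s = s" if "s \<in> S" for s
    unfolding pr_def using that by (intro orth_proj_unique[OF S]) (auto simp: subspace_0[OF subspace_orthogonal_comp])
  have prW: "pr w = 0" if "w \<in> W" for w
    unfolding pr_def using that S unfolding W_def by (intro orth_proj_unique[OF S]) (auto simp: subspace_0)
  have prsym: "x \<bullet> pr y = pr x \<bullet> y" for x y
  proof -
    have a: "(x - pr x) \<bullet> pr y = 0" using inner_W(2)[of "pr y" S "x - pr x"] prc unfolding W_def by blast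
    have b: "pr x \<bullet> (y - pr y) = 0" using inner_W(1)[of "pr x" S "y - pr y"] prc unfolding W_def by blast
    from a b show ?thesis by (simp add: inner_diff_left inner_diff_right)
  qed
  have Tsym: "transpose T = T"
  proof (rule sym_from_inner)
    fix x y
    show "x \<bullet> (T *v y) = (T *v x) \<bullet> y"
      unfolding Tx using prsym[of x y] sym_inner[OF QT, of x y]
      by (simp add: inner_add_left inner_add_right inner_diff_left inner_diff_right inner_commute)
  qed
  have TS: "\<forall>s\<in>S. T *v s = s" using prS QS by (simp add: Tx)
  have TWx: "T *v w = lm *\<^sub>R w + (lp - lm) *\<^sub>R (Q *v w)" if "w \<in> W" for w
    using prW[OF that] by (simp add: Tx)
  have TW: "\<forall>w\<in>orthogonal_comp S. T *v w \<in> orthogonal_comp S"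
  proof
    fix w assume "w \<in> orthogonal_comp S"
    then have w: "w \<in> W" unfolding W_def .
    have "lm *\<^sub>R w + (lp - lm) *\<^sub>R (Q *v w) \<in> W"
      using w QW Wsub by (simp add: subspace_add subspace_scale)
    then show "T *v w \<in> orthogonal_comp S" using TWx[OF w] unfolding W_def by simp
  qed
  have Teig: "lm \<le> \<mu> \<and> \<mu> \<le> lp" if w: "w \<in> orthogonal_comp S" "w \<noteq> 0" "T *v w = \<mu> *\<^sub>R w" for w \<mu>
  proof -
    have wW: "w \<in> W" using w(1) unfolding W_def .
    have "\<mu> * (w \<bullet> w) = w \<bullet> (T *v w)" using w(3) by simp
    also have "\<dots> = lm * (w \<bullet> w) + (lp - lm) * (w \<bullet> (Q *v w))" unfolding TWx[OF wW]
      by (simp add: inner_add_right)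
    finally have e: "(\<mu> - lm) * (w \<bullet> w) = (lp - lm) * (w \<bullet> (Q *v w))" by (simp add: algebra_simps)
    have ww: "w \<bullet> w > 0" using w(2) by simp
    have q0: "0 \<le> w \<bullet> (Q *v w)" and q1: "w \<bullet> (Q *v w) \<le> w \<bullet> w" using Qb by auto
    have "(lp - lm) * (w \<bullet> (Q *v w)) \<ge> 0" using le q0 by simp
    then have "(\<mu> - lm) * (w \<bullet> w) \<ge> 0" using e by simp
    then have A: "\<mu> \<ge> lm" using ww by (simp add: zero_le_mult_iff)
    have "(lp - lm) * (w \<bullet> (Q *v w)) \<le> (lp - lm) * (w \<bullet> w)" using le q1 by (simp add: mult_left_mono)
    then have "(\<mu> - lm) * (w \<bullet> w) \<le> (lp - lm) * (w \<bullet> w)" using e by simp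
    then have "\<mu> - lm \<le> lp - lm" using ww by (simp add: mult_le_cancel_right)
    then show ?thesis using A by simp
  qed
  have MC: "M_class S lm lp T" by (rule Mclass_intro[OF S Tsym TS TW Teig])
  have cols: "Y *v u = T *v (X *v u)" for u
  proof -
    define x where "x = X *v u"
    have Qx: "Q *v x = Q *v (P *v u)"
    proof -
      have "Q *v x = Q *v pr x + Q *v (x - pr x)" by (simp add: matrix_vector_right_distrib[symmetric])
      also have "Q *v pr x = 0" using QS prc(1) by blast
      finally show ?thesis unfolding Pu x_def by simp
    qed
    have Pux: "P *v u = x - pr x" unfolding Pu x_def ..
    have "T *v x = pr x + lm *\<^sub>R (x - pr x) + (lp - lm) *\<^sub>R (Q *v x)" by (rule Tx)
    also have "\<dots> = pr x + lm *\<^sub>R (P *v u) + (lp - lm) *\<^sub>R (Q *v (P *v u))" unfolding Qx Pux ..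
    also have "\<dots> = pr x + lm *\<^sub>R (P *v u) + (R *v u - lm *\<^sub>R (P *v u))" unfolding QP ..
    also have "\<dots> = pr x + R *v u" by simp
    also have "\<dots> = Y *v u" unfolding Ru x_def by simp
    finally show ?thesis unfolding x_def by simp
  qed
  show ?thesis unfolding interpolable_def
    using MC cols cols_iff by blast
qed

theorem theorem2:
  fixes S :: "(real^'n) set" and lm lp :: real and X Y :: "real^'k^'n"
  assumes "subspace S"
    and "-1 < lm" and "lm \<le> lp" and "lp < 1"
  shows "interpolable S lm lp X Y \<longleftrightarrow>
    (let Xb = proj_cols S X; Yb = proj_cols S Y; Xp = X - Xb; Yp = Y - Yb in
       Xb = Yb \<and>
       neg_semidef (transpose (Yp - lm *\<^sub>R Xp) ** (Yp - lp *\<^sub>R Xp)) \<and>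
       transpose Xp ** Yp = transpose Yp ** Xp)"
proof
  assume "interpolable S lm lp X Y"
  then show "(let Xb = proj_cols S X; Yb = proj_cols S Y; Xp = X - Xb; Yp = Y - Yb in
       Xb = Yb \<and>
       neg_semidef (transpose (Yp - lm *\<^sub>R Xp) ** (Yp - lp *\<^sub>R Xp)) \<and>
       transpose Xp ** Yp = transpose Yp ** Xp)"
    by (rule forward[OF assms(1) assms(4)])
next
  assume "(let Xb = proj_cols S X; Yb = proj_cols S Y; Xp = X - Xb; Yp = Y - Yb in
       Xb = Yb \<and>
       neg_semidef (transpose (Yp - lm *\<^sub>R Xp) ** (Yp - lp *\<^sub>R Xp)) \<and>
       transpose Xp ** Yp = transpose Yp ** Xp)"
  then show "interpolable S lm lp X Y" by (rule backward[OF assms(1) assms(3)])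
qed

end
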